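(* Let $M\ge 1$ be an integer and consider a memoryless channel with binary input alphabet $\{0,1\}$, output alphabet $\mathcal{Y}=\{-M,\dots,0,\dots,M\}$ and transition probabilities $\varepsilon_{y|x}=P_{Y|X}(y|x)$, which is symmetric in the sense that $\varepsilon_{y|1}=\varepsilon_{-y|0}$ for all $y\in\mathcal{Y}$. Let $\mathcal{C}\subseteq\{0,1\}^n$ be a binary linear code of length $n$ with minimum Hamming distance $d_{\min}$ and weight distribution $S_w$ ($S_w$ = number of codewords of Hamming weight $w$), used over this channel with maximum-likelihood decoding. Then the decoding error probability $P_e$ satisfies $$P_e\le \sum_{\substack{\boldsymbol{\ell}=(\ell_{-M},\dots,\ell_M)\in\mathbb{Z}_+^{2M+1}\\ \sum_j\ell_j=n}}\Big(\prod_{j=-M}^M \varepsilon_{j|0}^{\ell_j}\Big)\min\Bigg\{\sum_{w=d_{\min}}^n S_w\sum_{\substack{\boldsymbol{\mu}\in\mathcal{U}_w(\boldsymbol{\ell})\\ \sum_j\mu_j\mathrm{LLR}_j\le 0}}\binom{w}{\mu_{-M},\dots,\mu_M}\binom{n-w}{\ell_{-M}-\mu_{-M},\dots,\ell_M-\mu_M},\ \binom{n}{\ell_{-M},\dots,\ell_M}\Bigg\}.$$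
   Context: $\mathbb{Z}_+$ denotes the nonnegative integers, and $\binom{m}{a_1,\dots,a_k}=\frac{m!}{a_1!\cdots a_k!}$ is the multinomial coefficient (for $a_i\in\mathbb{Z}_+$ with $\sum a_i=m$). For $\boldsymbol{\ell}\in\mathbb{Z}_+^{2M+1}$ with $\sum_j\ell_j=n$ and $0\le w\le n$, $\mathcal{U}_w(\boldsymbol{\ell})=\{\boldsymbol{\mu}=(\mu_{-M},\dots,\mu_M)\in\mathbb{Z}_+^{2M+1}:\ \sum_j\mu_j=w,\ 0\le\mu_j\le\ell_j \text{ for all } j\}$. $\mathrm{LLR}_j=\log(\varepsilon_{j|0}/\varepsilon_{j|1})$; the condition $\sum_j\mu_j\mathrm{LLR}_j\le 0$ means $\prod_j(\varepsilon_{j|0}/\varepsilon_{j|1})^{\mu_j}\le 1$, i.e. a length-$w$ output vector with $\mu_j$ occurrences of symbol $j$ is at least as likely under the all-ones input as under the all-zeros input. By linearity and symmetry the error probability does not depend on the transmitted codeword, and the bound is on the probability that the decoder does not output the transmitted codeword (ties in the likelihood are counted as errors). *)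

theory Defs
  imports Complex_Main
begin

definition out_alph :: "nat \<Rightarrow> int set" where
  "out_alph M = {- int M .. int M}"

text \<open>Binary words of length n are bool lists (True = 1, False = 0).\<close>
definition binary_linear_code :: "nat \<Rightarrow> bool list set \<Rightarrow> bool" where
  "binary_linear_code n C \<longleftrightarrow>
     C \<noteq> {} \<and> (\<forall>c\<in>C. length c = n) \<and>
     (\<forall>c\<in>C. \<forall>c'\<in>C. map2 (\<noteq>) c c' \<in> C)"

definition hweight :: "bool list \<Rightarrow> nat" where
  "hweight c = length (filter id c)"

definition hdist :: "bool list \<Rightarrow> bool list \<Rightarrow> nat" where
  "hdist c c' = length (filter id (map2 (\<noteq>) c c'))"

definition dmin :: "bool list set \<Rightarrow> nat" where
  "dmin C = Min {hdist c c' | c c'. c \<in> C \<and> c' \<in> C \<and> c \<noteq> c'}"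

definition weight_distr :: "bool list set \<Rightarrow> nat \<Rightarrow> nat" where
  "weight_distr C w = card {c \<in> C. hweight c = w}"

text \<open>Memoryless channel: eps y x = P(Y = y | X = x), x \<in> {0,1}.
  Probability that output sequence ys is received when word c is sent.\<close>
definition chan_prob :: "(int \<Rightarrow> nat \<Rightarrow> real) \<Rightarrow> int list \<Rightarrow> bool list \<Rightarrow> real" where
  "chan_prob eps ys c = (\<Prod>i<length c. eps (ys ! i) (if c ! i then 1 else 0))"

definition out_seqs :: "nat \<Rightarrow> nat \<Rightarrow> int list set" where
  "out_seqs M n = {ys. length ys = n \<and> set ys \<subseteq> out_alph M}"

text \<open>Error probability of ML decoding when codeword c is transmitted:
  the probability of the received sequences for which some other codeword is
  at least as likely as c (ties counted as errors).\<close>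
definition ml_error_prob ::
  "nat \<Rightarrow> nat \<Rightarrow> (int \<Rightarrow> nat \<Rightarrow> real) \<Rightarrow> bool list set \<Rightarrow> bool list \<Rightarrow> real" where
  "ml_error_prob M n eps C c =
     (\<Sum>ys\<in>out_seqs M n.
        (if \<exists>c'\<in>C. c' \<noteq> c \<and> chan_prob eps ys c' \<ge> chan_prob eps ys c
         then chan_prob eps ys c else 0))"

text \<open>Multinomial coefficient m! / prod_{j in J} a_j!  (used when sum_J a = m).\<close>
definition multinom :: "nat \<Rightarrow> 'a set \<Rightarrow> ('a \<Rightarrow> nat) \<Rightarrow> real" where
  "multinom m J a = fact m / (\<Prod>j\<in>J. fact (a j))"

definition type_vecs :: "nat \<Rightarrow> nat \<Rightarrow> (int \<Rightarrow> nat) set" where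
  "type_vecs M n = {l. (\<forall>j. j \<notin> out_alph M \<longrightarrow> l j = 0) \<and> (\<Sum>j\<in>out_alph M. l j) = n}"

definition U_set :: "nat \<Rightarrow> nat \<Rightarrow> (int \<Rightarrow> nat) \<Rightarrow> (int \<Rightarrow> nat) set" where
  "U_set M w l = {mu. (\<forall>j. j \<notin> out_alph M \<longrightarrow> mu j = 0) \<and> (\<Sum>j\<in>out_alph M. mu j) = w
                      \<and> (\<forall>j\<in>out_alph M. mu j \<le> l j)}"

text \<open>The condition sum_j mu_j LLR_j <= 0, written (as in the paper's explanation)
  as prod_j (eps_{j|0}/eps_{j|1})^{mu_j} <= 1, cleared of denominators.\<close>
definition llr_nonpos :: "nat \<Rightarrow> (int \<Rightarrow> nat \<Rightarrow> real) \<Rightarrow> (int \<Rightarrow> nat) \<Rightarrow> bool" where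
  "llr_nonpos M eps mu \<longleftrightarrow>
     (\<Prod>j\<in>out_alph M. eps j 0 ^ mu j) \<le> (\<Prod>j\<in>out_alph M. eps j 1 ^ mu j)"

definition the_bound ::
  "nat \<Rightarrow> nat \<Rightarrow> (int \<Rightarrow> nat \<Rightarrow> real) \<Rightarrow> bool list set \<Rightarrow> real" where
  "the_bound M n eps C =
    (\<Sum>l\<in>type_vecs M n.
       (\<Prod>j\<in>out_alph M. eps j 0 ^ l j) *
       min (\<Sum>w = dmin C..n. real (weight_distr C w) *
              (\<Sum>mu\<in>{mu \<in> U_set M w l. llr_nonpos M eps mu}.
                 multinom w (out_alph M) mu *
                 multinom (n - w) (out_alph M) (\<lambda>j. l j - mu j)))
           (multinom n (out_alph M) l))"

end

theory Submission imports Defs "HOL-Combinatorics.Multiset_Permutations" begin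


definition tp :: "int list \<Rightarrow> nat set \<Rightarrow> int \<Rightarrow> nat" where
  "tp ys S j = card {i\<in>S. ys ! i = j}"

lemma multinom_nonneg: "multinom m J a \<ge> 0"
  unfolding multinom_def by (simp add: prod_nonneg)

lemma count_le:
  fixes J :: "int set"
  assumes "finite J"
  shows "real (card {xs. length xs = m \<and> set xs \<subseteq> J \<and> (\<forall>j\<in>J. card {i. i < m \<and> xs ! i = j} = a j)})
         \<le> multinom m J a"
proof (cases "{xs. length xs = m \<and> set xs \<subseteq> J \<and> (\<forall>j\<in>J. card {i. i < m \<and> xs ! i = j} = a j)} = {}")
  case True show ?thesis unfolding True by (simp add: multinom_nonneg)
next
  case False
  let ?X = "{xs. length xs = m \<and> set xs \<subseteq> J \<and> (\<forall>j\<in>J. card {i. i < m \<and> xs ! i = j} = a j)}"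
  from False obtain x0 where x0: "x0 \<in> ?X" by blast
  let ?A = "mset x0"
  have cnt: "count (mset xs) j = card {i. i < length xs \<and> xs ! i = j}" for xs :: "int list" and j
    by (simp add: count_mset count_list_eq_length_filter length_filter_conv_card eq_commute)
  have sub: "?X \<subseteq> permutations_of_multiset ?A"
  proof
    fix xs assume xs: "xs \<in> ?X"
    have "mset xs = mset x0"
    proof (rule multiset_eqI)
      fix j
      show "count (mset xs) j = count (mset x0) j"
      proof (cases "j \<in> J")
        case True then show ?thesis using xs x0 cnt by simp
      next
        case False
        then have "j \<notin> set xs" "j \<notin> set x0" using xs x0 by auto
        then show ?thesis by (simp add: count_mset count_list_0_iff)
      qed
    qed
    then show "xs \<in> permutations_of_multiset ?A" by (simp add: permutations_of_multiset_def)
  qed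
  have c1: "card ?X \<le> card (permutations_of_multiset ?A)"
    by (rule card_mono[OF finite_permutations_of_multiset sub])
  have aux: "real (card (permutations_of_multiset ?A)) * (\<Prod>x\<in>set_mset ?A. fact (count ?A x)) = fact (size ?A)"
    using card_permutations_of_multiset_aux[of ?A] proof -
    have "real (card (permutations_of_multiset ?A) * (\<Prod>x\<in>set_mset ?A. fact (count ?A x))) = real (fact (size ?A))"
      using card_permutations_of_multiset_aux[of ?A] by (rule arg_cong)
    then show ?thesis by (simp only: of_nat_mult of_nat_prod of_nat_fact)
  qed
  have sz: "size ?A = m" using x0 by simp
  have pr: "(\<Prod>x\<in>set_mset ?A. fact (count ?A x)) = (\<Prod>j\<in>J. (fact (a j) :: real))"
  proof -
    have "(\<Prod>x\<in>set_mset ?A. (fact (count ?A x)::real)) = (\<Prod>j\<in>J. fact (count ?A j))"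
      using x0 assms by (intro prod.mono_neutral_left) (auto simp: count_mset count_list_0_iff)
    also have "\<dots> = (\<Prod>j\<in>J. fact (a j))"
      using x0 cnt by (intro prod.cong) auto
    finally show ?thesis .
  qed
  have pos2: "(\<Prod>x\<in>set_mset ?A. (fact (count ?A x)::real)) > 0" by (simp add: prod_pos)
  have eqP: "real (card (permutations_of_multiset ?A)) = fact (size ?A) / (\<Prod>x\<in>set_mset ?A. fact (count ?A x))"
    using aux pos2 by (simp add: eq_divide_eq)
  also have "\<dots> = multinom m J a" unfolding multinom_def sz pr ..
  finally have eqP2: "real (card (permutations_of_multiset ?A)) = multinom m J a" .
  have "real (card ?X) \<le> real (card (permutations_of_multiset ?A))" using c1 by (simp only: of_nat_le_iff)
  then show ?thesis using eqP2 by (simp only:)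
qed

lemma finite_funs:
  fixes J :: "'a set"
  assumes "finite J"
  shows "finite {f::'a\<Rightarrow>nat. (\<forall>j. j \<notin> J \<longrightarrow> f j = 0) \<and> (\<forall>j\<in>J. f j \<le> k)}"
proof (rule finite_subset)
  show "{f::'a\<Rightarrow>nat. (\<forall>j. j \<notin> J \<longrightarrow> f j = 0) \<and> (\<forall>j\<in>J. f j \<le> k)}
        \<subseteq> (\<lambda>g j. if j \<in> J then g j else 0) ` (J \<rightarrow>\<^sub>E {..k})"
  proof
    fix f :: "'a \<Rightarrow> nat" assume f: "f \<in> {f. (\<forall>j. j \<notin> J \<longrightarrow> f j = 0) \<and> (\<forall>j\<in>J. f j \<le> k)}"
    have "f = (\<lambda>j. if j \<in> J then restrict f J j else 0)" using f by auto
    moreover have "restrict f J \<in> J \<rightarrow>\<^sub>E {..k}" using f by auto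
    ultimately show "f \<in> (\<lambda>g j. if j \<in> J then g j else 0) ` (J \<rightarrow>\<^sub>E {..k})" by blast
  qed
  show "finite ((\<lambda>g j. if j \<in> J then g j else 0) ` (J \<rightarrow>\<^sub>E {..k}))"
    using assms by (intro finite_imageI finite_PiE) auto
qed

lemma prod_tp:
  assumes "finite S" "finite J" "\<forall>i\<in>S. ys ! i \<in> J"
  shows "(\<Prod>i\<in>S. f (ys ! i)) = (\<Prod>j\<in>J. f j ^ tp ys S j)"
proof -
  have "(\<Prod>i\<in>S. f (ys ! i)) = (\<Prod>j\<in>J. \<Prod>i\<in>{x. x \<in> S \<and> ys ! x = j}. f (ys ! i))"
  proof -
    have im: "(\<lambda>i. ys ! i) ` S \<subseteq> J" using assms(3) by auto
    show ?thesis using prod.group[OF assms(1,2) im, of "\<lambda>i. f (ys ! i)"] by simp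
  qed
  also have "\<dots> = (\<Prod>j\<in>J. f j ^ tp ys S j)"
  proof (rule prod.cong[OF refl])
    fix j
    have "(\<Prod>i\<in>{x. x \<in> S \<and> ys ! x = j}. f (ys ! i)) = (\<Prod>i\<in>{x. x \<in> S \<and> ys ! x = j}. f j)"
      by (rule prod.cong) auto
    then show "(\<Prod>i\<in>{x. x \<in> S \<and> ys ! x = j}. f (ys ! i)) = f j ^ tp ys S j"
      unfolding tp_def by simp
  qed
  finally show ?thesis .
qed

lemma sum_tp:
  assumes "finite S" "finite J" "\<forall>i\<in>S. ys ! i \<in> J"
  shows "(\<Sum>j\<in>J. tp ys S j) = card S"
proof -
  have "card S = (\<Sum>i\<in>S. 1)" by simp
  also have "\<dots> = (\<Sum>j\<in>J. \<Sum>i\<in>{x. x \<in> S \<and> ys ! x = j}. 1)"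
  proof -
    have im: "(\<lambda>i. ys ! i) ` S \<subseteq> J" using assms(3) by auto
    show ?thesis using sum.group[OF assms(1,2) im, of "\<lambda>i. 1::nat"] by simp
  qed
  also have "\<dots> = (\<Sum>j\<in>J. tp ys S j)" unfolding tp_def by simp
  finally show ?thesis by simp
qed

lemma tp_mono: "S \<subseteq> T \<Longrightarrow> finite T \<Longrightarrow> tp ys S j \<le> tp ys T j"
  unfolding tp_def by (rule card_mono) auto

lemma tp_diff: "S \<subseteq> T \<Longrightarrow> finite T \<Longrightarrow> tp ys (T - S) j = tp ys T j - tp ys S j"
proof -
  assume a: "S \<subseteq> T" "finite T"
  have "{i\<in>T - S. ys ! i = j} = {i\<in>T. ys ! i = j} - {i\<in>S. ys ! i = j}" by auto
  then show ?thesis unfolding tp_def using a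
    by (simp add: card_Diff_subset finite_subset subset_iff)
qed

lemma tp_map:
  assumes "distinct L"
  shows "card {i. i < length L \<and> map (\<lambda>k. ys ! k) L ! i = j} = tp ys (set L) j"
proof -
  have "(\<lambda>i. L ! i) ` {i. i < length L \<and> map (\<lambda>k. ys ! k) L ! i = j} = {x\<in>set L. ys ! x = j}"
    by (auto simp: in_set_conv_nth)
  moreover have inj: "inj_on (\<lambda>i. L ! i) {i. i < length L \<and> map (\<lambda>k. ys ! k) L ! i = j}"
    using assms by (auto simp: inj_on_def nth_eq_iff_index_eq)
  ultimately show ?thesis unfolding tp_def using card_image[OF inj] by simp
qed



lemma count_split:
  fixes J :: "int set"
  assumes finJ: "finite J" and S: "S \<subseteq> {..<n}"
    and Z: "\<forall>ys\<in>Z. length ys = n \<and> set ys \<subseteq> J \<and> tp ys {..<n} = l \<and> tp ys S = mu"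
  shows "real (card Z) \<le> multinom (card S) J mu * multinom (n - card S) J (\<lambda>j. l j - mu j)"
proof -
  define LS where "LS = sorted_list_of_set S"
  define LS' where "LS' = sorted_list_of_set ({..<n} - S)"
  have finS: "finite S" using S finite_subset by blast
  have dLS: "distinct LS" "set LS = S" "length LS = card S" using finS by (auto simp: LS_def)
  have dLS': "distinct LS'" "set LS' = {..<n} - S" "length LS' = n - card S"
    using finS S by (auto simp: LS'_def card_Diff_subset)
  define A where "A = {xs. length xs = card S \<and> set xs \<subseteq> J \<and> (\<forall>j\<in>J. card {i. i < card S \<and> xs ! i = j} = mu j)}"
  define B where "B = {xs. length xs = n - card S \<and> set xs \<subseteq> J \<and> (\<forall>j\<in>J. card {i. i < n - card S \<and> xs ! i = j} = l j - mu j)}"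
  define F where "F ys = (map (\<lambda>k. ys ! k) LS, map (\<lambda>k. ys ! k) LS')" for ys :: "int list"
  have finA: "finite A"
    by (rule finite_subset[OF _ finite_lists_length_eq[OF finJ, of "card S"]]) (auto simp: A_def)
  have finB: "finite B"
    by (rule finite_subset[OF _ finite_lists_length_eq[OF finJ, of "n - card S"]]) (auto simp: B_def)
  have inj: "inj_on F Z"
  proof (rule inj_onI)
    fix x y assume x: "x \<in> Z" and y: "y \<in> Z" and e: "F x = F y"
    have "x ! i = y ! i" if "i < n" for i
    proof (cases "i \<in> S")
      case True
      then obtain k where "k < length LS" "LS ! k = i" using dLS by (metis in_set_conv_nth)
      then show ?thesis using e unfolding F_def by (metis nth_map prod.inject)
    next
      case False
      then have "i \<in> set LS'" using dLS' that by auto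
      then obtain k where "k < length LS'" "LS' ! k = i" by (metis in_set_conv_nth)
      then show ?thesis using e unfolding F_def by (metis nth_map prod.inject)
    qed
    then show "x = y" using x y Z by (intro nth_equalityI) auto
  qed
  have img: "F ` Z \<subseteq> A \<times> B"
  proof
    fix p assume "p \<in> F ` Z"
    then obtain ys where ys: "ys \<in> Z" and p: "p = F ys" by blast
    have yl: "length ys = n" "set ys \<subseteq> J" "tp ys {..<n} = l" "tp ys S = mu" using Z ys by auto
    have sub1: "set (map (\<lambda>k. ys ! k) LS) \<subseteq> J" using dLS S yl by (auto dest!: nth_mem)
    have sub2: "set (map (\<lambda>k. ys ! k) LS') \<subseteq> J" using dLS' yl by (auto dest!: nth_mem)
    have "map (\<lambda>k. ys ! k) LS \<in> A"
      using sub1 tp_map[OF dLS(1), of ys] dLS yl unfolding A_def by auto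
    moreover have "map (\<lambda>k. ys ! k) LS' \<in> B"
    proof -
      have "tp ys ({..<n} - S) j = l j - mu j" for j
        using tp_diff[OF S, of ys j] yl by simp
      then show ?thesis using sub2 tp_map[OF dLS'(1), of ys] dLS' unfolding B_def by auto
    qed
    ultimately show "p \<in> A \<times> B" using p F_def by simp
  qed
  have "card Z \<le> card (A \<times> B)"
    by (rule card_inj_on_le[OF inj img]) (simp add: finA finB)
  also have "\<dots> = card A * card B" by (simp add: card_cartesian_product)
  finally have "real (card Z) \<le> real (card A) * real (card B)" by (metis of_nat_le_iff of_nat_mult)
  also have "\<dots> \<le> multinom (card S) J mu * multinom (n - card S) J (\<lambda>j. l j - mu j)"
  proof (rule mult_mono)
    show "real (card A) \<le> multinom (card S) J mu" unfolding A_def by (rule count_le[OF finJ])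
    show "real (card B) \<le> multinom (n - card S) J (\<lambda>j. l j - mu j)" unfolding B_def by (rule count_le[OF finJ])
  qed (auto simp: multinom_nonneg)
  finally show ?thesis .
qed

lemma chan_split:
  assumes "length d = n"
  shows "chan_prob eps ys d = (\<Prod>i\<in>{i. i < n \<and> d ! i}. eps (ys ! i) 1) * (\<Prod>i\<in>{..<n} - {i. i < n \<and> d ! i}. eps (ys ! i) 0)"
proof -
  have "chan_prob eps ys d = (\<Prod>i\<in>{..<n} - {i. i < n \<and> d ! i}. eps (ys ! i) (if d ! i then 1 else 0)) *
        (\<Prod>i\<in>{i. i < n \<and> d ! i}. eps (ys ! i) (if d ! i then 1 else 0))"
    unfolding chan_prob_def assms by (rule prod.subset_diff) auto
  also have "\<dots> = (\<Prod>i\<in>{..<n} - {i. i < n \<and> d ! i}. eps (ys ! i) 0) * (\<Prod>i\<in>{i. i < n \<and> d ! i}. eps (ys ! i) 1)"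
    by (intro arg_cong2[where f="(*)"] prod.cong) auto
  finally show ?thesis by simp
qed

lemma chan_zero_split:
  assumes "S \<subseteq> {..<n}"
  shows "chan_prob eps ys (replicate n False) = (\<Prod>i\<in>S. eps (ys ! i) 0) * (\<Prod>i\<in>{..<n} - S. eps (ys ! i) 0)"
proof -
  have "chan_prob eps ys (replicate n False) = (\<Prod>i\<in>{..<n}. eps (ys ! i) 0)"
    unfolding chan_prob_def by simp
  also have "\<dots> = (\<Prod>i\<in>{..<n} - S. eps (ys ! i) 0) * (\<Prod>i\<in>S. eps (ys ! i) 0)"
    by (rule prod.subset_diff) (use assms in auto)
  finally show ?thesis by simp
qed

lemma map2_zero: "length d = n \<Longrightarrow> map2 (\<noteq>) d (replicate n False) = d"
  by (intro nth_equalityI) auto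

lemma hweight_card: "length d = n \<Longrightarrow> hweight d = card {i. i < n \<and> d ! i}"
  unfolding hweight_def by (simp add: length_filter_conv_card)

lemma dmin_le:
  assumes code: "binary_linear_code n C" and zC: "replicate n False \<in> C"
    and d: "d \<in> C" "d \<noteq> replicate n False"
  shows "dmin C \<le> hweight d"
proof -
  have lenC: "\<forall>c\<in>C. length c = n" using code by (simp add: binary_linear_code_def)
  have ld: "length d = n" using lenC d by blast
  have hw: "hdist d (replicate n False) = hweight d"
    unfolding hdist_def hweight_def map2_zero[OF ld] ..
  have fin: "finite {hdist c c' | c c'. c \<in> C \<and> c' \<in> C \<and> c \<noteq> c'}"
  proof (rule finite_subset[of _ "{..n}"])
    show "{hdist c c' | c c'. c \<in> C \<and> c' \<in> C \<and> c \<noteq> c'} \<subseteq> {..n}"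
    proof
      fix x assume "x \<in> {hdist c c' | c c'. c \<in> C \<and> c' \<in> C \<and> c \<noteq> c'}"
      then obtain c c' where x: "x = hdist c c'" and cC: "c \<in> C" by blast
      have "length (filter id (map2 (\<noteq>) c c')) \<le> length (map2 (\<noteq>) c c')"
        by (rule length_filter_le)
      also have "\<dots> \<le> length c" by simp
      finally have "x \<le> length c" unfolding x hdist_def .
      then show "x \<in> {..n}" using lenC cC by simp
    qed
  qed simp
  have mem: "hdist d (replicate n False) \<in> {hdist c c' | c c'. c \<in> C \<and> c' \<in> C \<and> c \<noteq> c'}"
    using d zC by blast
  show ?thesis unfolding dmin_def using Min_le[OF fin mem] hw by simp
qed



lemma main_zero:
  fixes M n :: nat and eps :: "int \<Rightarrow> nat \<Rightarrow> real" and C :: "bool list set"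
  assumes nn: "\<forall>y\<in>out_alph M. \<forall>x\<in>{0,1}. eps y x \<ge> 0"
    and code: "binary_linear_code n C"
    and zC: "replicate n False \<in> C"
  shows "ml_error_prob M n eps C (replicate n False) \<le> the_bound M n eps C"
proof -
  define J where "J = out_alph M"
  define z where "z = replicate n False"
  define Y where "Y = out_seqs M n"
  define Sof where "Sof d = {i. i < n \<and> d ! i}" for d :: "bool list"
  define T where "T = type_vecs M n"
  define P where "P l = (\<Prod>j\<in>J. eps j 0 ^ l j)" for l :: "int \<Rightarrow> nat"
  define err where "err ys = (\<exists>d\<in>C-{z}. llr_nonpos M eps (tp ys (Sof d)))" for ys
  define G where "G l w = (\<Sum>mu\<in>{mu \<in> U_set M w l. llr_nonpos M eps mu}.
      multinom w J mu * multinom (n - w) J (\<lambda>j. l j - mu j))" for l w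
  define B where "B l = (\<Sum>w = dmin C..n. real (weight_distr C w) * G l w)" for l
  have finJ: "finite J" by (simp add: J_def out_alph_def)
  have finY: "finite Y"
    by (rule finite_subset[OF _ finite_lists_length_eq[OF finJ, of n]]) (auto simp: Y_def out_seqs_def J_def)
  have lenC: "\<forall>d\<in>C. length d = n" using code by (simp add: binary_linear_code_def)
  have finC: "finite C"
    by (rule finite_subset[OF _ finite_lists_length_eq[OF finite_UNIV, of n]]) (use lenC in auto)
  have finT: "finite T"
  proof (rule finite_subset[OF _ finite_funs[OF finJ, of n]])
    show "T \<subseteq> {f. (\<forall>j. j \<notin> J \<longrightarrow> f j = 0) \<and> (\<forall>j\<in>J. f j \<le> n)}"
    proof
      fix l assume "l \<in> T"
      then have h: "(\<forall>j. j \<notin> J \<longrightarrow> l j = 0)" "(\<Sum>j\<in>J. l j) = n"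
        by (auto simp: T_def type_vecs_def J_def)
      have "l j \<le> (\<Sum>j\<in>J. l j)" if "j \<in> J" for j by (rule member_le_sum[OF that _ finJ]) simp
      then show "l \<in> {f. (\<forall>j. j \<notin> J \<longrightarrow> f j = 0) \<and> (\<forall>j\<in>J. f j \<le> n)}"
        using h by simp
    qed
  qed
  have Yin: "ys ! i \<in> J" if "ys \<in> Y" "i < n" for ys i
    using that by (auto simp: Y_def out_seqs_def J_def)
  have Ylen: "length ys = n" "set ys \<subseteq> J" if "ys \<in> Y" for ys
    using that by (auto simp: Y_def out_seqs_def J_def)
  have eps0: "eps j 0 \<ge> 0" "eps j 1 \<ge> 0" if "j \<in> J" for j using nn that J_def by auto
  have SofS: "Sof d \<subseteq> {..<n}" for d unfolding Sof_def by auto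
  have chz: "chan_prob eps ys z = P (tp ys {..<n})" if "ys \<in> Y" for ys
  proof -
    have "chan_prob eps ys z = (\<Prod>i\<in>{..<n}. eps (ys ! i) 0)" unfolding chan_prob_def z_def by simp
    also have "\<dots> = P (tp ys {..<n})" unfolding P_def
      by (rule prod_tp) (use finJ Yin that in auto)
    finally show ?thesis .
  qed
  have Pnn: "P l \<ge> 0" for l unfolding P_def using eps0 by (auto intro: prod_nonneg)
  have pw: "(if \<exists>c'\<in>C. c' \<noteq> z \<and> chan_prob eps ys c' \<ge> chan_prob eps ys z then chan_prob eps ys z else 0)
      \<le> (if err ys then chan_prob eps ys z else 0)" if ys: "ys \<in> Y" for ys
  proof -
    have cz0: "chan_prob eps ys z \<ge> 0" using chz[OF ys] Pnn by simp
    show ?thesis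
    proof (cases "chan_prob eps ys z = 0")
      case True then show ?thesis by simp
    next
      case False
      show ?thesis
      proof (cases "\<exists>c'\<in>C. c' \<noteq> z \<and> chan_prob eps ys c' \<ge> chan_prob eps ys z")
        case True
        then obtain d where d: "d \<in> C" "d \<noteq> z" "chan_prob eps ys d \<ge> chan_prob eps ys z" by blast
        define R where "R = (\<Prod>i\<in>{..<n} - Sof d. eps (ys ! i) 0)"
        define A1 where "A1 = (\<Prod>i\<in>Sof d. eps (ys ! i) 1)"
        define A0 where "A0 = (\<Prod>i\<in>Sof d. eps (ys ! i) 0)"
        have e1: "chan_prob eps ys d = A1 * R"
          using chan_split[of d n eps ys] lenC d unfolding A1_def R_def Sof_def by simp
        have e0: "chan_prob eps ys z = A0 * R"
          using chan_zero_split[OF SofS[of d], of eps ys] unfolding A0_def R_def z_def by simp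
        have R0: "R \<ge> 0" unfolding R_def using eps0 Yin[OF ys] by (auto intro: prod_nonneg)
        have "R \<noteq> 0" using False e0 by auto
        with R0 have "R > 0" by simp
        then have "A0 \<le> A1" using d(3) e0 e1 by simp
        moreover have "A0 = (\<Prod>j\<in>J. eps j 0 ^ tp ys (Sof d) j)" "A1 = (\<Prod>j\<in>J. eps j 1 ^ tp ys (Sof d) j)"
          unfolding A0_def A1_def using finJ Yin[OF ys] SofS[of d]
          by (auto intro!: prod_tp finite_subset[OF SofS])
        ultimately have "llr_nonpos M eps (tp ys (Sof d))" unfolding llr_nonpos_def J_def by simp
        then have "err ys" unfolding err_def using d by blast
        with True show ?thesis by (simp only: if_True if_P)
      next
        case False
        then have "(if \<exists>c'\<in>C. c' \<noteq> z \<and> chan_prob eps ys c' \<ge> chan_prob eps ys z then chan_prob eps ys z else 0) = 0"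
          by (rule if_not_P)
        moreover have "(if err ys then chan_prob eps ys z else 0) \<ge> 0" using cz0 by simp
        ultimately show ?thesis by linarith
      qed
    qed
  qed
  have step1: "ml_error_prob M n eps C z \<le> (\<Sum>ys\<in>Y. if err ys then chan_prob eps ys z else 0)"
    unfolding ml_error_prob_def Y_def[symmetric] by (rule sum_mono) (use pw in auto)
  have imgT: "(\<lambda>ys. tp ys {..<n}) ` Y \<subseteq> T"
  proof
    fix l assume "l \<in> (\<lambda>ys. tp ys {..<n}) ` Y"
    then obtain ys where ys: "ys \<in> Y" and l: "l = tp ys {..<n}" by blast
    have "\<forall>j. j \<notin> J \<longrightarrow> l j = 0" using Yin[OF ys] unfolding l tp_def by auto
    moreover have "(\<Sum>j\<in>J. l j) = n" unfolding l using sum_tp[of "{..<n}" J ys] finJ Yin[OF ys] by simp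
    ultimately show "l \<in> T" unfolding T_def type_vecs_def J_def by simp
  qed
  define Yl where "Yl l = {ys \<in> Y. tp ys {..<n} = l}" for l
  have step2: "(\<Sum>ys\<in>Y. if err ys then chan_prob eps ys z else 0)
      = (\<Sum>l\<in>T. \<Sum>ys\<in>Yl l. if err ys then P l else 0)"
  proof -
    have "(\<Sum>ys\<in>Y. if err ys then chan_prob eps ys z else 0)
        = (\<Sum>l\<in>T. \<Sum>ys\<in>{x. x \<in> Y \<and> tp x {..<n} = l}. if err ys then chan_prob eps ys z else 0)"
      by (rule sum.group[OF finY finT imgT, symmetric])
    also have "\<dots> = (\<Sum>l\<in>T. \<Sum>ys\<in>Yl l. if err ys then P l else 0)"
      unfolding Yl_def by (intro sum.cong refl) (auto simp: chz)
    finally show ?thesis .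
  qed
  have step3: "(\<Sum>ys\<in>Yl l. if err ys then P l else 0) \<le> P l * min (B l) (multinom n J l)"
    if lT: "l \<in> T" for l
  proof -
    define E where "E = {ys \<in> Yl l. err ys}"
    have finYl: "finite (Yl l)" unfolding Yl_def using finY by simp
    have finE: "finite E" unfolding E_def using finYl by simp
    have "(\<Sum>ys\<in>Yl l. if err ys then P l else 0) = (\<Sum>ys\<in>E. P l)"
      unfolding E_def by (rule sum.inter_filter[OF finYl, symmetric])
    also have "\<dots> = P l * real (card E)" by simp
    finally have eq: "(\<Sum>ys\<in>Yl l. if err ys then P l else 0) = P l * real (card E)" .
    have ca: "real (card E) \<le> multinom n J l"
    proof -
      have "card E \<le> card {xs. length xs = n \<and> set xs \<subseteq> J \<and> (\<forall>j\<in>J. card {i. i < n \<and> xs ! i = j} = l j)}"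
      proof (rule card_mono)
        show "finite {xs. length xs = n \<and> set xs \<subseteq> J \<and> (\<forall>j\<in>J. card {i. i < n \<and> xs ! i = j} = l j)}"
          by (rule finite_subset[OF _ finite_lists_length_eq[OF finJ, of n]]) auto
        show "E \<subseteq> {xs. length xs = n \<and> set xs \<subseteq> J \<and> (\<forall>j\<in>J. card {i. i < n \<and> xs ! i = j} = l j)}"
          using Ylen unfolding E_def Yl_def tp_def by auto
      qed
      then have "real (card E) \<le> real (card {xs. length xs = n \<and> set xs \<subseteq> J \<and> (\<forall>j\<in>J. card {i. i < n \<and> xs ! i = j} = l j)})"
        by (simp only: of_nat_le_iff)
      then show ?thesis using count_le[OF finJ, of n l] by linarith
    qed
    have Gnn: "G l w \<ge> 0" for w unfolding G_def by (intro sum_nonneg mult_nonneg_nonneg multinom_nonneg)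
    have per_d: "real (card {ys \<in> Yl l. llr_nonpos M eps (tp ys (Sof d))}) \<le> G l (hweight d)"
      if d: "d \<in> C" for d
    proof -
      define w where "w = hweight d"
      have wc: "w = card (Sof d)" unfolding w_def Sof_def using hweight_card lenC d by auto
      define U where "U = {mu \<in> U_set M w l. llr_nonpos M eps mu}"
      have finU: "finite U"
      proof (rule finite_subset[OF _ finite_funs[OF finJ, of w]])
        show "U \<subseteq> {f. (\<forall>j. j \<notin> J \<longrightarrow> f j = 0) \<and> (\<forall>j\<in>J. f j \<le> w)}"
        proof
          fix mu assume "mu \<in> U"
          then have h: "(\<forall>j. j \<notin> J \<longrightarrow> mu j = 0)" "(\<Sum>j\<in>J. mu j) = w"
            by (auto simp: U_def U_set_def J_def)
          have "mu j \<le> (\<Sum>j\<in>J. mu j)" if "j \<in> J" for j by (rule member_le_sum[OF that _ finJ]) simp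
          then show "mu \<in> {f. (\<forall>j. j \<notin> J \<longrightarrow> f j = 0) \<and> (\<forall>j\<in>J. f j \<le> w)}"
            using h by simp
        qed
      qed
      have sub: "{ys \<in> Yl l. llr_nonpos M eps (tp ys (Sof d))} \<subseteq> (\<Union>mu\<in>U. {ys \<in> Yl l. tp ys (Sof d) = mu})"
      proof
        fix ys assume ys: "ys \<in> {ys \<in> Yl l. llr_nonpos M eps (tp ys (Sof d))}"
        then have yY: "ys \<in> Y" and tl: "tp ys {..<n} = l" unfolding Yl_def by auto
        have "tp ys (Sof d) \<in> U_set M w l"
        proof -
          have "\<forall>j. j \<notin> J \<longrightarrow> tp ys (Sof d) j = 0"
          proof (intro allI impI)
            fix j assume "j \<notin> J"
            then have "{i\<in>Sof d. ys ! i = j} = {}" using Yin[OF yY] SofS[of d] by auto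
            then show "tp ys (Sof d) j = 0" unfolding tp_def by (metis card.empty)
          qed
          moreover have "(\<Sum>j\<in>J. tp ys (Sof d) j) = w" unfolding wc
            using sum_tp[of "Sof d" J ys] finJ Yin[OF yY] SofS[of d] finite_subset[OF SofS[of d]] by auto
          moreover have "tp ys (Sof d) j \<le> l j" for j
            using tp_mono[OF SofS[of d], of ys j] tl by simp
          ultimately show ?thesis unfolding U_set_def J_def by simp
        qed
        then show "ys \<in> (\<Union>mu\<in>U. {ys \<in> Yl l. tp ys (Sof d) = mu})" using ys unfolding U_def by auto
      qed
      have "card {ys \<in> Yl l. llr_nonpos M eps (tp ys (Sof d))} \<le> card (\<Union>mu\<in>U. {ys \<in> Yl l. tp ys (Sof d) = mu})"
        by (rule card_mono[OF _ sub]) (use finYl finU in auto)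
      also have "\<dots> \<le> (\<Sum>mu\<in>U. card {ys \<in> Yl l. tp ys (Sof d) = mu})"
        by (rule card_UN_le[OF finU])
      finally have "real (card {ys \<in> Yl l. llr_nonpos M eps (tp ys (Sof d))}) \<le> (\<Sum>mu\<in>U. real (card {ys \<in> Yl l. tp ys (Sof d) = mu}))"
        by (simp only: of_nat_sum[symmetric] of_nat_le_iff)
      also have "\<dots> \<le> (\<Sum>mu\<in>U. multinom w J mu * multinom (n - w) J (\<lambda>j. l j - mu j))"
      proof (rule sum_mono)
        fix mu assume "mu \<in> U"
        show "real (card {ys \<in> Yl l. tp ys (Sof d) = mu}) \<le> multinom w J mu * multinom (n - w) J (\<lambda>j. l j - mu j)"
          unfolding wc by (rule count_split[OF finJ SofS]) (use Ylen in \<open>auto simp: Yl_def\<close>)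
      qed
      also have "\<dots> = G l (hweight d)" unfolding G_def U_def w_def ..
      finally show ?thesis .
    qed
    have cb: "real (card E) \<le> B l"
    proof -
      have "E = (\<Union>d\<in>C-{z}. {ys \<in> Yl l. llr_nonpos M eps (tp ys (Sof d))})"
        unfolding E_def err_def by auto
      then have "card E \<le> (\<Sum>d\<in>C-{z}. card {ys \<in> Yl l. llr_nonpos M eps (tp ys (Sof d))})"
        using card_UN_le[of "C-{z}"] finC by simp
      then have "real (card E) \<le> (\<Sum>d\<in>C-{z}. real (card {ys \<in> Yl l. llr_nonpos M eps (tp ys (Sof d))}))"
        by (simp only: of_nat_sum[symmetric] of_nat_le_iff)
      also have "\<dots> \<le> (\<Sum>d\<in>C-{z}. G l (hweight d))"
        by (rule sum_mono) (use per_d in auto)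
      also have "\<dots> = (\<Sum>w\<in>{dmin C..n}. \<Sum>d\<in>{x. x \<in> C-{z} \<and> hweight x = w}. G l (hweight d))"
      proof (rule sum.group[symmetric])
        show "finite (C - {z})" using finC by simp
        show "hweight ` (C - {z}) \<subseteq> {dmin C..n}"
        proof
          fix w assume "w \<in> hweight ` (C - {z})"
          then obtain d where d: "d \<in> C" "d \<noteq> z" "w = hweight d" by blast
          have "dmin C \<le> w" using dmin_le[OF code zC] d z_def by simp
          moreover have "hweight d \<le> length d" unfolding hweight_def by (rule length_filter_le)
          then have "w \<le> n" using d lenC by simp
          ultimately show "w \<in> {dmin C..n}" by simp
        qed
      qed simp
      also have "\<dots> = (\<Sum>w\<in>{dmin C..n}. real (card {x. x \<in> C-{z} \<and> hweight x = w}) * G l w)"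
        by (intro sum.cong refl) simp
      also have "\<dots> \<le> (\<Sum>w\<in>{dmin C..n}. real (weight_distr C w) * G l w)"
      proof (rule sum_mono)
        fix w
        have "card {x. x \<in> C-{z} \<and> hweight x = w} \<le> weight_distr C w"
          unfolding weight_distr_def by (rule card_mono) (use finC in auto)
        then show "real (card {x. x \<in> C-{z} \<and> hweight x = w}) * G l w \<le> real (weight_distr C w) * G l w"
          by (intro mult_right_mono Gnn) simp
      qed
      finally show ?thesis unfolding B_def .
    qed
    have "real (card E) \<le> min (B l) (multinom n J l)" using ca cb by simp
    then show ?thesis unfolding eq by (intro mult_left_mono Pnn)
  qed
  have "the_bound M n eps C = (\<Sum>l\<in>T. P l * min (B l) (multinom n J l))"
    unfolding the_bound_def T_def P_def B_def G_def J_def ..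
  moreover have s3: "(\<Sum>l\<in>T. \<Sum>ys\<in>Yl l. if err ys then P l else 0) \<le> (\<Sum>l\<in>T. P l * min (B l) (multinom n J l))"
    by (rule sum_mono) (rule step3)
  ultimately show ?thesis using step1 step2 unfolding z_def by linarith
qed



lemma sym_reduce:
  fixes M n :: nat and eps :: "int \<Rightarrow> nat \<Rightarrow> real" and C :: "bool list set"
  assumes sym: "\<forall>y\<in>out_alph M. eps y 1 = eps (- y) 0"
    and code: "binary_linear_code n C" and cC: "c \<in> C"
  shows "ml_error_prob M n eps C c = ml_error_prob M n eps C (replicate n False)"
proof -
  define J where "J = out_alph M"
  define Y where "Y = out_seqs M n"
  define z where "z = replicate n False"
  define fl where "fl ys = map (\<lambda>i. if c ! i then - (ys ! i) else ys ! i) [0..<n]" for ys :: "int list"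
  define x where "x d = map2 (\<noteq>) d c" for d :: "bool list"
  have lenC: "\<forall>d\<in>C. length d = n" using code by (simp add: binary_linear_code_def)
  have clos: "\<forall>d\<in>C. \<forall>d'\<in>C. map2 (\<noteq>) d d' \<in> C" using code by (simp add: binary_linear_code_def)
  have lenc: "length c = n" using lenC cC by simp
  have negJ: "- y \<in> J" if "y \<in> J" for y using that by (auto simp: J_def out_alph_def)
  have Ylen: "length ys = n" "set ys \<subseteq> J" if "ys \<in> Y" for ys
    using that by (auto simp: Y_def out_seqs_def J_def)
  have Yin: "ys ! i \<in> J" if "ys \<in> Y" "i < n" for ys i
    using Ylen[OF that(1)] that(2) by (auto dest: nth_mem)
  have flY: "fl ys \<in> Y" if "ys \<in> Y" for ys
    using Yin[OF that] negJ unfolding Y_def out_seqs_def J_def[symmetric] fl_def by (auto simp: set_conv_nth)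
  have flfl: "fl (fl ys) = ys" if "ys \<in> Y" for ys
    using Ylen[OF that] by (intro nth_equalityI) (auto simp: fl_def)
  have esym: "eps (- y) (if \<not> b then 1 else 0) = eps y (if b then 1 else 0)" if "y \<in> J" for y b
  proof (cases b)
    case True then show ?thesis using sym that J_def by simp
  next
    case False
    have "eps (- y) 1 = eps (- (- y)) 0" using sym negJ[OF that] J_def by blast
    then show ?thesis using False by simp
  qed
  have lenx: "length (x d) = n" if "length d = n" for d using that lenc by (simp add: x_def)
  have chfl: "chan_prob eps (fl ys) (x d) = chan_prob eps ys d" if ys: "ys \<in> Y" and d: "length d = n" for ys d
    unfolding chan_prob_def lenx[OF d] d
  proof (rule prod.cong[OF refl])
    fix i assume "i \<in> {..<n}"
    then have i: "i < n" by simp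
    have xi: "x d ! i = (d ! i \<noteq> c ! i)" using i d lenc by (simp add: x_def)
    show "eps (fl ys ! i) (if x d ! i then 1 else 0) = eps (ys ! i) (if d ! i then 1 else 0)"
      using esym[OF Yin[OF ys i], of "d ! i"] i unfolding xi by (auto simp: fl_def)
  qed
  have xx: "x (x d) = d" if "length d = n" for d
    using that lenc lenx[OF that] by (intro nth_equalityI) (auto simp: x_def)
  have xC: "x d \<in> C" if "d \<in> C" for d using clos that cC by (simp add: x_def)
  have xc: "x c = z" using lenc by (intro nth_equalityI) (auto simp: x_def z_def)
  have xz: "x z = c" using lenc by (intro nth_equalityI) (auto simp: x_def z_def)
  have "ml_error_prob M n eps C z = ml_error_prob M n eps C c"
    unfolding ml_error_prob_def Y_def[symmetric]
  proof (rule sum.reindex_bij_witness[of Y fl fl])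
    fix ys assume ys: "ys \<in> Y"
    show "fl (fl ys) = ys" "fl ys \<in> Y" using flfl flY ys by auto
    have ch: "chan_prob eps (fl ys) d = chan_prob eps ys (x d)" if "d \<in> C" for d
      using chfl[OF ys lenx[of d]] xx[of d] lenC that by simp
    have chc: "chan_prob eps (fl ys) c = chan_prob eps ys z" using ch[OF cC] xc by simp
    have ex: "(\<exists>c'\<in>C. c' \<noteq> c \<and> chan_prob eps (fl ys) c' \<ge> chan_prob eps (fl ys) c) =
          (\<exists>c'\<in>C. c' \<noteq> z \<and> chan_prob eps ys c' \<ge> chan_prob eps ys z)"
    proof
      assume "\<exists>c'\<in>C. c' \<noteq> c \<and> chan_prob eps (fl ys) c' \<ge> chan_prob eps (fl ys) c"
      then obtain d where d: "d \<in> C" "d \<noteq> c" "chan_prob eps (fl ys) d \<ge> chan_prob eps (fl ys) c" by blast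
      have "x d \<noteq> z" using d xx[of d] lenC xz by metis
      then show "\<exists>c'\<in>C. c' \<noteq> z \<and> chan_prob eps ys c' \<ge> chan_prob eps ys z"
        using d ch chc xC by (metis)
    next
      assume "\<exists>c'\<in>C. c' \<noteq> z \<and> chan_prob eps ys c' \<ge> chan_prob eps ys z"
      then obtain d where d: "d \<in> C" "d \<noteq> z" "chan_prob eps ys d \<ge> chan_prob eps ys z" by blast
      have "x d \<noteq> c" using d xx[of d] lenC xc by metis
      moreover have "chan_prob eps (fl ys) (x d) = chan_prob eps ys d"
        using ch[OF xC[OF d(1)]] xx[of d] lenC d by simp
      ultimately show "\<exists>c'\<in>C. c' \<noteq> c \<and> chan_prob eps (fl ys) c' \<ge> chan_prob eps (fl ys) c"
        using d xC chc by metis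
    qed
    show "(if \<exists>c'\<in>C. c' \<noteq> c \<and> chan_prob eps (fl ys) c' \<ge> chan_prob eps (fl ys) c
           then chan_prob eps (fl ys) c else 0) =
          (if \<exists>c'\<in>C. c' \<noteq> z \<and> chan_prob eps ys c' \<ge> chan_prob eps ys z
           then chan_prob eps ys z else 0)"
      unfolding ex unfolding chc by (rule refl)
  qed (use flfl flY in auto)
  then show ?thesis unfolding z_def by simp
qed

theorem theorem1:
  fixes M n :: nat and eps :: "int \<Rightarrow> nat \<Rightarrow> real" and C :: "bool list set"
    and c :: "bool list"
  assumes "M \<ge> 1"
    and "\<forall>y\<in>out_alph M. \<forall>x\<in>{0,1}. eps y x \<ge> 0"
    and "\<forall>x\<in>{0,1}. (\<Sum>y\<in>out_alph M. eps y x) = 1"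
    and "\<forall>y\<in>out_alph M. eps y 1 = eps (- y) 0"
    and "binary_linear_code n C"
    and "c \<in> C"
  shows "ml_error_prob M n eps C c \<le> the_bound M n eps C"
proof -
  have lenc: "length c = n" using assms(5,6) by (simp add: binary_linear_code_def)
  have "map2 (\<noteq>) c c \<in> C" using assms(5,6) by (simp add: binary_linear_code_def)
  moreover have "map2 (\<noteq>) c c = replicate n False" using lenc by (intro nth_equalityI) auto
  ultimately have zC: "replicate n False \<in> C" by simp
  show ?thesis
    using sym_reduce[OF assms(4,5,6)] main_zero[OF assms(2,5) zC] by simp
qed


end
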